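(* Let $W_0\in\mathcal{W}$, let $s_0\in\mathbb{R}^{|I||J|}$ be a fixed vector and $S_0\in\mathbb{R}^{|I||J|\times|I||J|}$ a fixed matrix, and consider the linear assignment flow $$\dot W=\Pi_W\Big(s_0+S_0\,\Pi_{W_0}\log\frac{W}{W_0}\Big),\qquad W(0)=W_0 .$$ Then its solution admits the representation $$W(t)=\mathrm{Exp}_{W_0}\big(V(t)\big),$$ where $V(t)\in\mathcal{T}_0$ solves the linear ODE $$\dot V=\Pi_{W_0}(s_0+S_0V),\qquad V(0)=0 .$$
   Context: Let $I,J$ be finite index sets. Operations on vectors (products, quotients, $\log$, $e^{(\cdot)}$) are componentwise. $\mathcal{S}=\{p\in\mathbb{R}^{|J|}: p_j>0,\ \langle\mathbb{1},p\rangle=1\}$, $T_0=\{v\in\mathbb{R}^{|J|}:\langle\mathbb{1},v\rangle=0\}$. For $p\in\mathcal{S}$, $\Pi_p(z)=(\mathrm{Diag}(p)-pp^\top)z$ and $\mathrm{Exp}_p:T_0\to\mathcal{S}$, $\mathrm{Exp}_p(v)=\frac{p\,e^{v/p}}{\langle p,e^{v/p}\rangle}$ (whose inverse is $q\mapsto\Pi_p\log\frac{q}{p}$). The assignment manifold is $\mathcal{W}=\mathcal{S}^{|I|}$ with points $W=(W_i)_{i\in I}$, and $\mathcal{T}_0=T_0^{|I|}$; the maps $\Pi_W$ and $\mathrm{Exp}_W$ act blockwise: $(\Pi_WZ)_i=\Pi_{W_i}Z_i$, $(\mathrm{Exp}_W V)_i=\mathrm{Exp}_{W_i}(V_i)$.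 *)

theory Defs
  imports "HOL-Analysis.Analysis"
begin

text \<open>Index sets I, J are the finite types 'i, 'j.
  Vectors of R^{|I||J|} are represented blockwise as real^'j^'i, matrices on R^{|I||J|}
  as functions ('i \<times> 'j) \<Rightarrow> ('i \<times> 'j) \<Rightarrow> real.\<close>

definition prob_simplex :: "real^'j \<Rightarrow> bool" where
  "prob_simplex p \<longleftrightarrow> (\<forall>j. p$j > 0) \<and> (\<Sum>j\<in>UNIV. p$j) = 1"

definition tangent0 :: "real^'j \<Rightarrow> bool" where
  "tangent0 v \<longleftrightarrow> (\<Sum>j\<in>UNIV. v$j) = 0"

definition proj_p :: "real^'j \<Rightarrow> real^'j \<Rightarrow> real^'j" where
  "proj_p p z = (\<chi> j. p$j * z$j - p$j * (\<Sum>k\<in>UNIV. p$k * z$k))"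

definition exp_p :: "real^'j \<Rightarrow> real^'j \<Rightarrow> real^'j" where
  "exp_p p v = (\<chi> j. p$j * exp (v$j / p$j) / (\<Sum>k\<in>UNIV. p$k * exp (v$k / p$k)))"

definition assign_mf :: "real^'j^'i \<Rightarrow> bool" where
  "assign_mf W \<longleftrightarrow> (\<forall>i. prob_simplex (W$i))"

definition tangent0_W :: "real^'j^'i \<Rightarrow> bool" where
  "tangent0_W V \<longleftrightarrow> (\<forall>i. tangent0 (V$i))"

definition proj_W :: "real^'j^'i \<Rightarrow> real^'j^'i \<Rightarrow> real^'j^'i" where
  "proj_W W Z = (\<chi> i. proj_p (W$i) (Z$i))"

definition exp_W :: "real^'j^'i \<Rightarrow> real^'j^'i \<Rightarrow> real^'j^'i" where
  "exp_W W V = (\<chi> i. exp_p (W$i) (V$i))"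

definition log_ratio :: "real^'j^'i \<Rightarrow> real^'j^'i \<Rightarrow> real^'j^'i" where
  "log_ratio W W0 = (\<chi> i j. ln (W$i$j / W0$i$j))"

definition mat_apply :: "('i \<times> 'j \<Rightarrow> 'i \<times> 'j \<Rightarrow> real) \<Rightarrow> real^'j^'i \<Rightarrow> real^'j^'i" where
  "mat_apply S Z = (\<chi> i j. \<Sum>(k,l)\<in>UNIV. S (i,j) (k,l) * Z$k$l)"

end

theory Submission
  imports Defs
begin


lemma vd_comp:
  fixes f :: "real \<Rightarrow> real^'j::finite^'i::finite"
  assumes "(f has_vector_derivative f') F"
  shows "((\<lambda>t. f t $ i $ j) has_real_derivative f' $ i $ j) F"
proof -
  have "((\<lambda>t. f t $ i) has_vector_derivative f' $ i) F"
    using bounded_linear.has_vector_derivative[OF bounded_linear_vec_nth assms] .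
  from bounded_linear.has_vector_derivative[OF bounded_linear_vec_nth this]
  show ?thesis by (simp add: has_real_derivative_iff_has_vector_derivative)
qed

lemma vd_build:
  fixes f :: "real \<Rightarrow> real^'j::finite^'i::finite"
  assumes "\<And>i j. ((\<lambda>t. f t $ i $ j) has_real_derivative f' $ i $ j) F"
  shows "(f has_vector_derivative f') F"
proof -
  have "bounded_linear (\<lambda>x::real. x *\<^sub>R f')" by (rule bounded_linear_scaleR_left)
  moreover have "((\<lambda>y. (f y - (f (Lim F (\<lambda>x. x)) + (y - Lim F (\<lambda>x. x)) *\<^sub>R f')) /\<^sub>R norm (y - Lim F (\<lambda>x. x))) \<longlongrightarrow> 0) F"
  proof (rule vec_tendstoI, rule vec_tendstoI)
    fix i j
    from assms[of i j] have "((\<lambda>y. (f y $ i $ j - (f (Lim F (\<lambda>x. x)) $ i $ j + (y - Lim F (\<lambda>x. x)) *\<^sub>R (f' $ i $ j))) /\<^sub>R norm (y - Lim F (\<lambda>x. x))) \<longlongrightarrow> 0) F"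
      by (simp add: has_real_derivative_iff_has_vector_derivative has_vector_derivative_def has_derivative_def diff_diff_eq)
    then show "((\<lambda>x. ((f x - (f (Lim F (\<lambda>x. x)) + (x - Lim F (\<lambda>x. x)) *\<^sub>R f')) /\<^sub>R norm (x - Lim F (\<lambda>x. x))) $ i $ j) \<longlongrightarrow> 0 $ i $ j) F"
      by simp
  qed
  ultimately show ?thesis by (simp add: has_vector_derivative_def has_derivative_def diff_diff_eq)
qed

lemma lin_uniq:
  fixes D :: "real \<Rightarrow> 'a::euclidean_space"
  assumes T: "is_interval T" "0 \<in> T"
    and der: "\<And>x. x \<in> T \<Longrightarrow> (D has_vector_derivative A (D x)) (at x within T)"
    and D0: "D 0 = 0" and lin: "linear A"
    and t: "t \<in> T"
  shows "D t = 0"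
proof -
  obtain K where K: "K > 0" "\<And>x. norm (A x) \<le> norm x * K"
    using bounded_linear.pos_bounded[OF lin[unfolded linear_conv_bounded_linear]] by blast
  have ip: "\<And>x. x \<in> T \<Longrightarrow> ((\<lambda>y. D y \<bullet> D y) has_real_derivative 2 * (D x \<bullet> A (D x))) (at x within T)"
  proof -
    fix x assume x: "x \<in> T"
    have "((\<lambda>y. D y \<bullet> D y) has_vector_derivative D x \<bullet> A (D x) + A (D x) \<bullet> D x) (at x within T)"
      using bounded_bilinear.has_vector_derivative[OF bounded_bilinear_inner der[OF x] der[OF x]] .
    then show "?thesis x" by (simp add: has_real_derivative_iff_has_vector_derivative inner_commute)
  qed
  have cs: "\<And>x. \<bar>D x \<bullet> A (D x)\<bar> \<le> K * (D x \<bullet> D x)"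
  proof -
    fix x
    have "\<bar>D x \<bullet> A (D x)\<bar> \<le> norm (D x) * norm (A (D x))" by (rule Cauchy_Schwarz_ineq2)
    also have "\<dots> \<le> norm (D x) * (norm (D x) * K)" by (rule mult_left_mono[OF K(2)]) simp
    also have "\<dots> = K * (D x \<bullet> D x)" by (simp add: power2_norm_eq_inner[symmetric] power2_eq_square)
    finally show "?thesis x" .
  qed
  have "D t \<bullet> D t = 0"
  proof (cases "t \<ge> 0")
    case True
    have sub: "{0..t} \<subseteq> T" using T t True by (meson atLeastAtMost_iff is_interval_1 subsetI)
    define g where "g y = exp (-2*K*y) * (D y \<bullet> D y)" for y
    define g' where "g' y = exp (-2*K*y) * (-2*K) * (D y \<bullet> D y) + exp (-2*K*y) * (2 * (D y \<bullet> A (D y)))" for y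
    have gd: "(g has_real_derivative g' y) (at y within {0..t})" if "0 \<le> y" "y \<le> t" for y
    proof -
      have y: "y \<in> T" using sub that by auto
      have e: "((\<lambda>y. exp (-2*K*y)) has_real_derivative exp (-2*K*y) * (-2*K)) (at y within {0..t})"
        by (auto intro!: derivative_eq_intros)
      show ?thesis unfolding g_def g'_def
        using DERIV_mult[OF e has_field_derivative_subset[OF ip[OF y] sub]] by (simp add: algebra_simps)
    qed
    obtain \<xi> where "g t - g 0 = g' \<xi> * (t - 0)"
      using mvt_very_simple[OF True, of g "\<lambda>y h. g' y * h"] gd
      by (metis has_field_derivative_def mult.commute)
    moreover have "g' \<xi> \<le> 0"
    proof -
      have "D \<xi> \<bullet> A (D \<xi>) - K*(D \<xi> \<bullet> D \<xi>) \<le> 0" using cs[of \<xi>] by arith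
      moreover have "g' \<xi> = 2 * exp (-2*K*\<xi>) * (D \<xi> \<bullet> A (D \<xi>) - K*(D \<xi> \<bullet> D \<xi>))"
        unfolding g'_def by (simp add: algebra_simps)
      ultimately show ?thesis by (simp add: mult_nonneg_nonpos)
    qed
    moreover have "g 0 = 0" using D0 by (simp add: g_def)
    ultimately have "g t \<le> 0" using True by (simp add: mult_nonpos_nonneg)
    then have "D t \<bullet> D t \<le> 0" unfolding g_def by (simp add: mult_le_0_iff)
    then show ?thesis by (meson antisym inner_ge_zero)
  next
    case False
    have sub: "{t..0} \<subseteq> T" using T t False by (meson atLeastAtMost_iff is_interval_1 subsetI)
    define g where "g y = exp (2*K*y) * (D y \<bullet> D y)" for y
    define g' where "g' y = exp (2*K*y) * (2*K) * (D y \<bullet> D y) + exp (2*K*y) * (2 * (D y \<bullet> A (D y)))" for y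
    have gd: "(g has_real_derivative g' y) (at y within {t..0})" if "t \<le> y" "y \<le> 0" for y
    proof -
      have y: "y \<in> T" using sub that by auto
      have e: "((\<lambda>y. exp (2*K*y)) has_real_derivative exp (2*K*y) * (2*K)) (at y within {t..0})"
        by (auto intro!: derivative_eq_intros)
      show ?thesis unfolding g_def g'_def
        using DERIV_mult[OF e has_field_derivative_subset[OF ip[OF y] sub]] by (simp add: algebra_simps)
    qed
    have tl: "t \<le> 0" using False by simp
    obtain \<xi> where "g 0 - g t = g' \<xi> * (0 - t)"
      using mvt_very_simple[OF tl, of g "\<lambda>y h. g' y * h"] gd
      by (metis has_field_derivative_def mult.commute)
    moreover have "g' \<xi> \<ge> 0"
    proof -
      have "K*(D \<xi> \<bullet> D \<xi>) + D \<xi> \<bullet> A (D \<xi>) \<ge> 0" using cs[of \<xi>] by arith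
      moreover have "g' \<xi> = 2 * exp (2*K*\<xi>) * (K*(D \<xi> \<bullet> D \<xi>) + D \<xi> \<bullet> A (D \<xi>))"
        unfolding g'_def by (simp add: algebra_simps)
      ultimately show ?thesis by simp
    qed
    moreover have "g 0 = 0" using D0 by (simp add: g_def)
    moreover have "g' \<xi> * (0 - t) \<ge> 0" using \<open>g' \<xi> \<ge> 0\<close> tl by (simp add: mult_nonneg_nonpos)
    ultimately have "g t \<le> 0" by linarith
    then have "D t \<bullet> D t \<le> 0" unfolding g_def by (simp add: mult_le_0_iff)
    then show ?thesis by (meson antisym inner_ge_zero)
  qed
  then show ?thesis by simp
qed



lemma simplex_pos: "prob_simplex p \<Longrightarrow> p $ j > 0" by (simp add: prob_simplex_def)
lemma simplex_sum: "prob_simplex p \<Longrightarrow> (\<Sum>j\<in>UNIV. p $ j) = 1" by (simp add: prob_simplex_def)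

lemma sum_proj:
  fixes p :: "real^'j::finite"
  assumes "prob_simplex p" shows "(\<Sum>j\<in>UNIV. proj_p p z $ j) = 0"
proof -
  have "(\<Sum>j\<in>UNIV. proj_p p z $ j) = (\<Sum>j\<in>UNIV. p$j * z$j) - (\<Sum>j\<in>UNIV. p$j) * (\<Sum>k\<in>UNIV. p$k * z$k)"
    by (simp add: proj_p_def sum_subtractf sum_distrib_right)
  then show ?thesis using simplex_sum[OF assms] by simp
qed

lemma Z_pos:
  fixes p :: "real^'j::finite"
  assumes "prob_simplex p" shows "(\<Sum>k\<in>UNIV. p$k * exp (v$k / p$k)) > 0"
  using simplex_pos[OF assms] by (intro sum_pos) auto

lemma exp_simplex:
  fixes p :: "real^'j::finite"
  assumes "prob_simplex p" shows "prob_simplex (exp_p p v)"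
proof -
  let ?Z = "(\<Sum>k\<in>UNIV. p$k * exp (v$k / p$k))"
  have Z: "?Z > 0" by (rule Z_pos[OF assms])
  have "(\<Sum>j\<in>UNIV. exp_p p v $ j) = (\<Sum>j\<in>UNIV. p$j * exp (v$j / p$j)) / ?Z"
    by (simp add: exp_p_def sum_divide_distrib[symmetric])
  also have "\<dots> = 1" using Z by simp
  finally show ?thesis unfolding prob_simplex_def exp_p_def
    using simplex_pos[OF assms] Z by (simp add: exp_p_def)
qed

lemma log_exp:
  fixes p v :: "real^'j::finite"
  assumes p: "prob_simplex p" and v: "tangent0 v"
  shows "proj_p p (\<chi> j. ln (exp_p p v $ j / p $ j)) = v"
proof -
  let ?Z = "(\<Sum>k\<in>UNIV. p$k * exp (v$k / p$k))"
  have Z: "?Z > 0" by (rule Z_pos[OF p])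
  have l: "ln (exp_p p v $ j / p $ j) = v$j / p$j - ln ?Z" for j
    using simplex_pos[OF p, of j] Z by (simp add: exp_p_def ln_div ln_mult)
  have s: "(\<Sum>k\<in>UNIV. p$k * (v$k / p$k - ln ?Z)) = - ln ?Z"
  proof -
    have "(\<Sum>k\<in>UNIV. p$k * (v$k / p$k - ln ?Z)) = (\<Sum>k\<in>UNIV. v$k - p$k * ln ?Z)"
      using simplex_pos[OF p] by (intro sum.cong) (auto simp: field_simps less_imp_neq[symmetric])
    also have "\<dots> = - ln ?Z" using v simplex_sum[OF p]
      by (simp add: tangent0_def sum_subtractf sum_distrib_right[symmetric])
    finally show ?thesis .
  qed
  have pn: "p$j \<noteq> 0" for j using simplex_pos[OF p, of j] by simp
  have "proj_p p (\<chi> j. ln (exp_p p v $ j / p $ j)) $ j = v $ j" for j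
  proof -
    have "proj_p p (\<chi> j. ln (exp_p p v $ j / p $ j)) $ j = p$j * (v$j / p$j - ln ?Z) - p$j * (\<Sum>k\<in>UNIV. p$k * (v$k / p$k - ln ?Z))"
      unfolding proj_p_def by (simp only: vec_lambda_beta l)
    also have "\<dots> = v $ j" unfolding s using pn[of j] by (simp add: field_simps)
    finally show ?thesis .
  qed
  then show ?thesis by (simp add: vec_eq_iff)
qed

lemma exp_log:
  fixes p q :: "real^'j::finite"
  assumes p: "prob_simplex p" and q: "prob_simplex q"
  shows "exp_p p (proj_p p (\<chi> j. ln (q $ j / p $ j))) = q"
proof -
  define c where "c = (\<Sum>k\<in>UNIV. p$k * ln (q $ k / p $ k))"
  have e: "p$j * exp (proj_p p (\<chi> j. ln (q $ j / p $ j)) $ j / p$j) = q$j * exp (-c)" for j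
  proof -
    have "proj_p p (\<chi> j. ln (q $ j / p $ j)) $ j / p$j = ln (q $ j / p $ j) - c"
      using simplex_pos[OF p, of j] by (simp add: proj_p_def c_def field_simps)
    then show ?thesis using simplex_pos[OF p, of j] simplex_pos[OF q, of j]
      by (simp add: exp_diff exp_minus divide_inverse)
  qed
  have "(\<Sum>k\<in>UNIV. q$k * exp (-c)) = exp (-c)" using simplex_sum[OF q]
    by (simp add: sum_distrib_right[symmetric])
  then show ?thesis unfolding exp_p_def e by (simp add: vec_eq_iff)
qed



lemma exp_deriv:
  fixes p z :: "real^'j::finite" and v :: "real \<Rightarrow> real^'j"
  assumes p: "prob_simplex p"
    and dv: "\<And>k. ((\<lambda>t. v t $ k) has_real_derivative proj_p p z $ k) (at t0)"
  shows "((\<lambda>t. exp_p p (v t) $ j) has_real_derivative proj_p (exp_p p (v t0)) z $ j) (at t0)"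
proof -
  define e where "e k = exp (v t0 $ k / p $ k)" for k
  define c where "c = (\<Sum>k\<in>UNIV. p$k * z$k)"
  define Z where "Z = (\<Sum>k\<in>UNIV. p$k * e k)"
  define S where "S = (\<Sum>k\<in>UNIV. p$k * e k * z$k)"
  have pn: "p$k \<noteq> 0" for k using simplex_pos[OF p, of k] by simp
  have Z: "Z > 0" unfolding Z_def e_def by (rule Z_pos[OF p])
  have q: "proj_p p z $ k / p $ k = z$k - c" for k
    using pn[of k] by (simp add: proj_p_def c_def field_simps)
  have ek: "((\<lambda>t. exp (v t $ k / p $ k)) has_real_derivative e k * (z$k - c)) (at t0)" for k
    unfolding e_def q[symmetric] by (rule DERIV_fun_exp, rule DERIV_cdivide, rule dv)
  have dZ: "((\<lambda>t. \<Sum>k\<in>UNIV. p$k * exp (v t $ k / p $ k)) has_real_derivative (\<Sum>k\<in>UNIV. p$k * (e k * (z$k - c)))) (at t0)"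
    by (rule DERIV_sum, rule DERIV_cmult, rule ek)
  have dZ': "(\<Sum>k\<in>UNIV. p$k * (e k * (z$k - c))) = S - c * Z"
    unfolding S_def Z_def by (simp add: algebra_simps sum_subtractf sum_distrib_left)
  have dq: "((\<lambda>t. p$j * exp (v t $ j / p $ j) / (\<Sum>k\<in>UNIV. p$k * exp (v t $ k / p $ k))) has_real_derivative
     ((p$j * (e j * (z$j - c))) * Z - (S - c * Z) * (p$j * e j)) / Z^2) (at t0)"
    using DERIV_quotient[OF DERIV_cmult[OF ek[of j]] dZ] Z unfolding dZ'
    by (simp add: Z_def e_def power2_eq_square)
  have U: "exp_p p (v t0) $ k = p$k * e k / Z" for k by (simp add: exp_p_def e_def Z_def)
  have sU: "(\<Sum>k\<in>UNIV. exp_p p (v t0) $ k * z $ k) = S / Z"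
    unfolding U S_def by (simp add: sum_divide_distrib[symmetric] algebra_simps)
  have "proj_p (exp_p p (v t0)) z $ j = ((p$j * (e j * (z$j - c))) * Z - (S - c * Z) * (p$j * e j)) / Z^2"
    unfolding proj_p_def vec_lambda_beta sU using Z by (simp add: U field_simps power2_eq_square)
  with dq show ?thesis by (simp add: exp_p_def)
qed

lemma log_deriv:
  fixes p z :: "real^'j::finite" and w :: "real \<Rightarrow> real^'j"
  assumes p: "prob_simplex p" and w: "prob_simplex (w t0)"
    and dw: "\<And>k. ((\<lambda>t. w t $ k) has_real_derivative proj_p (w t0) z $ k) (at t0 within T)"
  shows "((\<lambda>t. proj_p p (\<chi> j. ln (w t $ j / p $ j)) $ j) has_real_derivative proj_p p z $ j) (at t0 within T)"
proof -
  define d where "d = (\<Sum>k\<in>UNIV. w t0 $ k * z$k)"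
  define c where "c = (\<Sum>k\<in>UNIV. p$k * z$k)"
  have pn: "p$k > 0" for k using simplex_pos[OF p, of k] by simp
  have wn: "w t0 $k > 0" for k using simplex_pos[OF w, of k] by simp
  have Lk: "((\<lambda>t. ln (w t $ k / p $ k)) has_real_derivative z$k - d) (at t0 within T)" for k
  proof -
    have "((\<lambda>t. ln (w t $ k / p $ k)) has_real_derivative 1 / (w t0 $ k / p $ k) * (proj_p (w t0) z $ k / p $ k)) (at t0 within T)"
      by (rule DERIV_chain2[OF DERIV_ln_divide DERIV_cdivide[OF dw]]) (use pn wn in auto)
    moreover have "1 / (w t0 $ k / p $ k) * (proj_p (w t0) z $ k / p $ k) = z$k - d"
      using pn[of k] wn[of k] by (simp add: proj_p_def d_def field_simps)
    ultimately show ?thesis by simp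
  qed
  have f: "(\<lambda>t. proj_p p (\<chi> j. ln (w t $ j / p $ j)) $ j) = (\<lambda>t. p$j * ln (w t $ j / p $ j) - p$j * (\<Sum>k\<in>UNIV. p$k * ln (w t $ k / p $ k)))"
    by (simp add: proj_p_def)
  have D: "((\<lambda>t. p$j * ln (w t $ j / p $ j) - p$j * (\<Sum>k\<in>UNIV. p$k * ln (w t $ k / p $ k))) has_real_derivative
      p$j * (z$j - d) - p$j * (\<Sum>k\<in>UNIV. p$k * (z$k - d))) (at t0 within T)"
    by (intro DERIV_diff DERIV_cmult DERIV_sum Lk)
  moreover have s: "(\<Sum>k\<in>UNIV. p$k * (z$k - d)) = c - d" using simplex_sum[OF p]
    by (simp add: c_def right_diff_distrib sum_subtractf sum_distrib_right[symmetric])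
  have "p$j * (z$j - d) - p$j * (\<Sum>k\<in>UNIV. p$k * (z$k - d)) = proj_p p z $ j"
    unfolding s by (simp add: proj_p_def c_def algebra_simps)
  then show ?thesis using D unfolding f by simp
qed



lemma linear_proj_W: "linear (proj_W W0)"
  by (rule linearI) (simp_all add: vec_eq_iff proj_W_def proj_p_def algebra_simps sum.distrib sum_distrib_left)

lemma linear_mat_apply: "linear (mat_apply S0)"
  by (rule linearI) (simp_all add: vec_eq_iff mat_apply_def algebra_simps sum.distrib sum_distrib_left case_prod_beta)

lemma log_exp_W:
  assumes "assign_mf W0" "tangent0_W V"
  shows "proj_W W0 (log_ratio (exp_W W0 V) W0) = V"
proof -
  have "(proj_W W0 (log_ratio (exp_W W0 V) W0)) $ i = V $ i" for i
  proof -
    have "(proj_W W0 (log_ratio (exp_W W0 V) W0)) $ i = proj_p (W0$i) (\<chi> j. ln (exp_p (W0$i) (V$i) $ j / W0$i$j))"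
      by (simp add: proj_W_def log_ratio_def exp_W_def)
    also have "\<dots> = V $ i" using log_exp assms by (auto simp: assign_mf_def tangent0_W_def)
    finally show ?thesis .
  qed
  then show ?thesis by (simp add: vec_eq_iff)
qed

lemma exp_log_W:
  assumes "assign_mf W0" "assign_mf W"
  shows "exp_W W0 (proj_W W0 (log_ratio W W0)) = W"
proof -
  have "(exp_W W0 (proj_W W0 (log_ratio W W0))) $ i = W $ i" for i
  proof -
    have "(exp_W W0 (proj_W W0 (log_ratio W W0))) $ i = exp_p (W0$i) (proj_p (W0$i) (\<chi> j. ln (W$i$j / W0$i$j)))"
      by (simp add: proj_W_def log_ratio_def exp_W_def)
    also have "\<dots> = W $ i" using exp_log assms by (auto simp: assign_mf_def)
    finally show ?thesis .
  qed
  then show ?thesis by (simp add: vec_eq_iff)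
qed

theorem proposition4p2:
  fixes W0 s0 :: "real^'j::finite^'i::finite"
    and S0 :: "'i \<times> 'j \<Rightarrow> 'i \<times> 'j \<Rightarrow> real"
    and V W :: "real \<Rightarrow> real^'j^'i"
    and T :: "real set"
  assumes W0: "assign_mf W0"
    and V_ode: "\<And>t. (V has_vector_derivative proj_W W0 (s0 + mat_apply S0 (V t))) (at t)"
    and V_init: "V 0 = 0"
    and T: "is_interval T" "0 \<in> T"
    and W_mf: "\<And>t. t \<in> T \<Longrightarrow> assign_mf (W t)"
    and W_ode: "\<And>t. t \<in> T \<Longrightarrow>
       (W has_vector_derivative proj_W (W t) (s0 + mat_apply S0 (proj_W W0 (log_ratio (W t) W0))))
         (at t within T)"
    and W_init: "W 0 = W0"
  shows "(\<forall>t. tangent0_W (V t))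
    \<and> (\<forall>t\<in>T. W t = exp_W W0 (V t))
    \<and> (\<forall>t. assign_mf (exp_W W0 (V t))
          \<and> ((\<lambda>t. exp_W W0 (V t)) has_vector_derivative
               proj_W (exp_W W0 (V t)) (s0 + mat_apply S0 (proj_W W0 (log_ratio (exp_W W0 (V t)) W0)))) (at t))
    \<and> exp_W W0 (V 0) = W0"
proof -
  have W0i: "prob_simplex (W0$i)" for i using W0 by (simp add: assign_mf_def)
  have tan: "tangent0_W (V t)" for t
    unfolding tangent0_W_def tangent0_def
  proof
    fix i
    have "\<forall>x. ((\<lambda>t. \<Sum>j\<in>UNIV. V t $ i $ j) has_real_derivative 0) (at x)"
    proof
      fix x
      have "((\<lambda>t. \<Sum>j\<in>UNIV. V t $ i $ j) has_real_derivative (\<Sum>j\<in>UNIV. proj_W W0 (s0 + mat_apply S0 (V x)) $ i $ j)) (at x)"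
        by (rule DERIV_sum, rule vd_comp[OF V_ode])
      moreover have "(\<Sum>j\<in>UNIV. proj_W W0 (s0 + mat_apply S0 (V x)) $ i $ j) = 0"
        using sum_proj[OF W0i[of i]] by (simp add: proj_W_def)
      ultimately show "((\<lambda>t. \<Sum>j\<in>UNIV. V t $ i $ j) has_real_derivative 0) (at x)" by simp
    qed
    from DERIV_isconst_all[OF this, of t 0] show "(\<Sum>j\<in>UNIV. V t $ i $ j) = 0" using V_init by simp
  qed
  have mf: "assign_mf (exp_W W0 (V t))" for t
    using exp_simplex[OF W0i] by (simp add: assign_mf_def exp_W_def)
  have der: "((\<lambda>t. exp_W W0 (V t)) has_vector_derivative
               proj_W (exp_W W0 (V t)) (s0 + mat_apply S0 (proj_W W0 (log_ratio (exp_W W0 (V t)) W0)))) (at t)" for t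
  proof (rule vd_build)
    fix i j
    have "((\<lambda>t. exp_p (W0$i) (V t $ i) $ j) has_real_derivative proj_p (exp_p (W0$i) (V t $ i)) ((s0 + mat_apply S0 (V t)) $ i) $ j) (at t)"
      by (rule exp_deriv[OF W0i]) (use vd_comp[OF V_ode] in \<open>simp add: proj_W_def\<close>)
    then show "((\<lambda>t. exp_W W0 (V t) $ i $ j) has_real_derivative
      proj_W (exp_W W0 (V t)) (s0 + mat_apply S0 (proj_W W0 (log_ratio (exp_W W0 (V t)) W0))) $ i $ j) (at t)"
      using log_exp_W[OF W0 tan[of t]] by (simp add: exp_W_def proj_W_def)
  qed
  define Y where "Y t = proj_W W0 (log_ratio (W t) W0)" for t
  have WY: "W t = exp_W W0 (Y t)" if "t \<in> T" for t
    unfolding Y_def using exp_log_W[OF W0 W_mf[OF that]] by simp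
  have Yd: "(Y has_vector_derivative proj_W W0 (s0 + mat_apply S0 (Y t))) (at t within T)" if t: "t \<in> T" for t
  proof (rule vd_build)
    fix i j
    have "((\<lambda>t. proj_p (W0$i) (\<chi> j. ln (W t $ i $ j / W0 $ i $ j)) $ j) has_real_derivative proj_p (W0$i) ((s0 + mat_apply S0 (Y t)) $ i) $ j) (at t within T)"
      by (rule log_deriv[OF W0i]) (use W_mf[OF t] vd_comp[OF W_ode[OF t]] in \<open>simp_all add: proj_W_def Y_def assign_mf_def\<close>)
    then show "((\<lambda>t. Y t $ i $ j) has_real_derivative proj_W W0 (s0 + mat_apply S0 (Y t)) $ i $ j) (at t within T)"
      by (simp add: Y_def proj_W_def log_ratio_def)
  qed
  have Y0: "Y 0 = 0"
    using W_init W0i by (simp add: Y_def log_ratio_def proj_W_def proj_p_def vec_eq_iff less_imp_neq[symmetric] simplex_pos)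
  define A where "A x = proj_W W0 (mat_apply S0 x)" for x
  have linA: "linear A" unfolding A_def
    using linear_compose[OF linear_mat_apply linear_proj_W] by (simp add: o_def)
  have Dd: "((\<lambda>t. Y t - V t) has_vector_derivative A (Y t - V t)) (at t within T)" if t: "t \<in> T" for t
  proof -
    have "((\<lambda>t. Y t - V t) has_vector_derivative proj_W W0 (s0 + mat_apply S0 (Y t)) - proj_W W0 (s0 + mat_apply S0 (V t))) (at t within T)"
      by (rule has_vector_derivative_diff[OF Yd[OF t] has_vector_derivative_at_within[OF V_ode]])
    moreover have "proj_W W0 (s0 + mat_apply S0 (Y t)) - proj_W W0 (s0 + mat_apply S0 (V t)) = A (Y t - V t)"
      unfolding A_def
      by (simp add: linear_diff[OF linear_mat_apply] linear_diff[OF linear_proj_W] linear_add[OF linear_proj_W])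
    ultimately show ?thesis by simp
  qed
  have YV: "Y t = V t" if "t \<in> T" for t
    using lin_uniq[OF T, of "\<lambda>t. Y t - V t" A t] Dd Y0 V_init linA that by simp
  have e0: "exp_W W0 (V 0) = W0"
    using V_init W0i by (simp add: exp_W_def exp_p_def vec_eq_iff simplex_sum)
  show ?thesis using tan WY YV mf der e0 by simp
qed

end
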